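(* Let $F$ be a periodic fabric of order greater than $4$ whose side-preserving symmetry group $H_1$ is generated by side-preserving glide-reflections and is transitive on the set of all strands, and suppose $F$ is perfectly coloured by thin striping. Let $P$ be the resulting pattern, regarded as the design of a prefabric. Let $\gamma$ be a side-preserving glide-reflection symmetry of $F$ whose axis runs diagonally (at $45^\circ$ to the strands) through cell centres and whose glide is $k\delta$ for an integer $k$, where $\delta=\sqrt2$ is the length of a cell diagonal. (i) If $k$ is even and the axis passes through irredundant cells, or $k$ is odd and the axis passes through redundant cells, then the prefabric with design $P$ has a side-preserving glide-reflection with the same axis and glide. (ii) If $k$ is even and the axis passes through redundant cells, or $k$ is odd and the axis passes through irredundant cells, then the prefabric with design $P$ has a side-reversing glide-reflection with the same axis and glide.
   Context: The plane is divided into unit square cells by a square grid. A prefabric consists of vertical strands (warps, columns of cells) and horizontal strands (wefts, rows of cells), with a specification in every cell of which strand is uppermost when viewed from the obverse. Its design colours a cell dark if the warp is uppermost and pale if the weft is uppermost; any dark/pale colouring of the cells, regarded as a design, determines a prefabric. A prefabric is periodic if invariant under two linearly independent translations; its order is the period of the up/down sequence along a strand. A symmetry is an isometry of the plane preserving the grid and the prefabric, possibly composed with side reversal $\tau$ (reflection in the plane of the prefabric, interchanging which strand is uppermost in every cell); symmetries without $\tau$ are side-preserving, those with $\tau$ side-reversing. $G_1$ is the symmetry group and $H_1$ its side-preserving subgroup. A fabric is a prefabric that does not fall apart, where a prefabric falls apart if some nonempty proper subset $S$ of the strands is uppermost at every crossing of a strand of $S$ with a strand outside $S$. Thin striping colours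 warps alternately dark and pale and wefts alternately dark and pale; the pattern colours each cell with the colour of the strand uppermost there. A cell is redundant if the warp and weft crossing there have the same colour and irredundant otherwise; these form a checkerboard, and a diagonal line through cell centres passes only through cells of one class. The colouring is perfect if every symmetry in $G_1$ maps all dark strands to dark strands and all pale strands to pale strands, or interchanges the two colour classes of strands. *)

theory Defs
  imports Complex_Main
begin

text \<open>Cell (i,j) (column i, row j) is the
unit square centred at the lattice point i + j*ii; the grid consists of the lines
Re z = n + 1/2 and Im z = n + 1/2 (n integer). A design (prefabric) is
D :: int * int => bool, with D (i,j) = True meaning the cell is dark, i.e. the warp
(column i) is uppermost; False means pale (weft, row j, uppermost).\<close>

type_synonym design = "int \<times> int \<Rightarrow> bool"

datatype strand = Warp int | Weft int

definition centre :: "int \<times> int \<Rightarrow> complex" where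
  "centre c = Complex (of_int (fst c)) (of_int (snd c))"

definition grid :: "complex set" where
  "grid = {z. \<exists>n::int. Re z = of_int n + 1/2 \<or> Im z = of_int n + 1/2}"

definition plane_isometry :: "(complex \<Rightarrow> complex) \<Rightarrow> bool" where
  "plane_isometry f \<longleftrightarrow> (\<forall>z w. dist (f z) (f w) = dist z w)"

text \<open>Does the isometry carry vertical strands to horizontal ones?\<close>
definition swaps :: "(complex \<Rightarrow> complex) \<Rightarrow> bool" where
  "swaps f \<longleftrightarrow> Re (f \<i> - f 0) \<noteq> 0"

text \<open>(f, s) is a symmetry of the prefabric with design D: f is a grid-preserving
isometry, s = True means f is composed with the side reversal tau.  The image of the
warp (resp. weft) through a cell is a weft (resp. warp) exactly when f swaps the
directions, and tau interchanges which strand is uppermost in every cell.\<close>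
definition is_sym :: "design \<Rightarrow> (complex \<Rightarrow> complex) \<Rightarrow> bool \<Rightarrow> bool" where
  "is_sym D f s \<longleftrightarrow> plane_isometry f \<and> f ` grid = grid \<and>
     (\<forall>c c'. f (centre c) = centre c' \<longrightarrow> D c' = (D c \<noteq> (swaps f \<noteq> s)))"

definition G1 :: "design \<Rightarrow> ((complex \<Rightarrow> complex) \<times> bool) set" where
  "G1 D = {(f, s). is_sym D f s}"

definition H1 :: "design \<Rightarrow> (complex \<Rightarrow> complex) set" where
  "H1 D = {f. is_sym D f False}"

text \<open>Reflection in the line through p with unit direction u, followed by the
translation by s*u parallel to that line (the glide, signed along u).\<close>
definition glide_map :: "complex \<Rightarrow> complex \<Rightarrow> real \<Rightarrow> complex \<Rightarrow> complex" where
  "glide_map p u s = (\<lambda>z. p + u\<^sup>2 * cnj (z - p) + of_real s * u)"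

definition glide_reflection :: "(complex \<Rightarrow> complex) \<Rightarrow> bool" where
  "glide_reflection f \<longleftrightarrow> (\<exists>p u s. cmod u = 1 \<and> s \<noteq> 0 \<and> f = glide_map p u s)"

inductive_set generated :: "(complex \<Rightarrow> complex) set \<Rightarrow> (complex \<Rightarrow> complex) set"
  for S where
  gen_id: "id \<in> generated S"
| gen_base: "f \<in> S \<Longrightarrow> f \<in> generated S"
| gen_comp: "f \<in> generated S \<Longrightarrow> g \<in> generated S \<Longrightarrow> f \<circ> g \<in> generated S"
| gen_inv: "f \<in> generated S \<Longrightarrow> inv f \<in> generated S"

text \<open>Strands as their centre lines.\<close>
fun strand_line :: "strand \<Rightarrow> complex set" where
  "strand_line (Warp i) = {z. Re z = of_int i}"
| "strand_line (Weft j) = {z. Im z = of_int j}"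

definition falls_apart :: "design \<Rightarrow> bool" where
  "falls_apart D \<longleftrightarrow> (\<exists>S::strand set. S \<noteq> {} \<and> S \<noteq> UNIV \<and>
     (\<forall>i j. (Warp i \<in> S \<and> Weft j \<notin> S \<longrightarrow> D (i, j)) \<and>
            (Weft j \<in> S \<and> Warp i \<notin> S \<longrightarrow> \<not> D (i, j))))"

definition is_fabric :: "design \<Rightarrow> bool" where
  "is_fabric D \<longleftrightarrow> \<not> falls_apart D"

definition periodic :: "design \<Rightarrow> bool" where
  "periodic D \<longleftrightarrow> (\<exists>v w. Im (cnj v * w) \<noteq> 0 \<and>
      is_sym D (\<lambda>z. z + v) False \<and> is_sym D (\<lambda>z. z + w) False)"

fun strand_has_period :: "design \<Rightarrow> strand \<Rightarrow> nat \<Rightarrow> bool" where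
  "strand_has_period D (Warp i) p = (\<forall>j. D (i, j + int p) = D (i, j))"
| "strand_has_period D (Weft j) p = (\<forall>i. D (i + int p, j) = D (i, j))"

definition order :: "design \<Rightarrow> nat" where
  "order D = (LEAST p. 0 < p \<and> (\<forall>\<sigma>. strand_has_period D \<sigma> p))"

text \<open>Thin striping with phases a, b: warp i is dark iff (even i = a), weft j is dark
iff (even j = b).\<close>
fun dark_strand :: "bool \<Rightarrow> bool \<Rightarrow> strand \<Rightarrow> bool" where
  "dark_strand a b (Warp i) = (even i = a)"
| "dark_strand a b (Weft j) = (even j = b)"

definition pattern :: "bool \<Rightarrow> bool \<Rightarrow> design \<Rightarrow> design" where
  "pattern a b D = (\<lambda>(i, j). if D (i, j) then dark_strand a b (Warp i)
                                         else dark_strand a b (Weft j))"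

definition redundant :: "bool \<Rightarrow> bool \<Rightarrow> int \<times> int \<Rightarrow> bool" where
  "redundant a b c \<longleftrightarrow> dark_strand a b (Warp (fst c)) = dark_strand a b (Weft (snd c))"

definition perfect :: "bool \<Rightarrow> bool \<Rightarrow> design \<Rightarrow> bool" where
  "perfect a b D \<longleftrightarrow> (\<forall>(f, s) \<in> G1 D.
     (\<forall>\<sigma> \<rho>. f ` strand_line \<sigma> = strand_line \<rho> \<longrightarrow> dark_strand a b \<rho> = dark_strand a b \<sigma>) \<or>
     (\<forall>\<sigma> \<rho>. f ` strand_line \<sigma> = strand_line \<rho> \<longrightarrow> dark_strand a b \<rho> \<noteq> dark_strand a b \<sigma>))"

end

theory Submission
  imports Defs
begin

lemma centre_inj: "centre c = centre c' \<Longrightarrow> c = c'"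
  by (cases c; cases c') (simp add: centre_def)

lemma g1: "glide_map (centre c) (Complex (1 / sqrt 2) (1 / sqrt 2)) (of_int k * sqrt 2) (centre (x,y))
   = centre (fst c - snd c + y + k, snd c - fst c + x + k)"
  by (cases c) (simp add: glide_map_def centre_def complex_eq_iff power2_eq_square field_simps)

lemma g2: "glide_map (centre c) (Complex (1 / sqrt 2) (- 1 / sqrt 2)) (of_int k * sqrt 2) (centre (x,y))
   = centre (fst c + snd c - y + k, fst c + snd c - x - k)"
  by (cases c) (simp add: glide_map_def centre_def complex_eq_iff power2_eq_square field_simps)

lemma s1: "swaps (glide_map p (Complex (1 / sqrt 2) (1 / sqrt 2)) s)"
  by (simp add: swaps_def glide_map_def power2_eq_square field_simps)

lemma s2: "swaps (glide_map p (Complex (1 / sqrt 2) (- 1 / sqrt 2)) s)"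
  by (simp add: swaps_def glide_map_def power2_eq_square field_simps)

lemma main:
  assumes sym: "is_sym D g False" and sw: "swaps g"
  and h: "\<And>x y. g (centre (x,y)) = centre (h (x,y))"
  and par: "\<And>x y. (even (fst (h (x,y))) = (even y = E)) \<and> (even (snd (h (x,y))) = (even x = E))"
  shows "is_sym (pattern a b D) g (a = (E = b))"
proof -
  have Dr: "\<And>c c'. g (centre c) = centre c' \<Longrightarrow> D c' = (\<not> D c)"
    using sym sw unfolding is_sym_def by auto
  show ?thesis
    unfolding is_sym_def
  proof (intro conjI allI impI)
    show "plane_isometry g" "g ` grid = grid" using sym unfolding is_sym_def by auto
  next
    fix c c' assume e: "g (centre c) = centre c'"
    obtain x y where c: "c = (x,y)" by (cases c)
    have c': "c' = h (x,y)" using e h[of x y] centre_inj c by metis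
    obtain x' y' where hh: "h (x,y) = (x',y')" by (cases "h (x,y)")
    have D': "D (x',y') = (\<not> D (x,y))" using Dr e c c' hh by auto
    have p: "even x' = (even y = E)" "even y' = (even x = E)" using par[of x y] hh by auto
    show "pattern a b D c' = (pattern a b D c \<noteq> (swaps g \<noteq> (a = (E = b))))"
      using D' p sw unfolding c c' hh pattern_def by auto
  qed
qed

theorem corollary3p2:
  fixes D :: design and a b :: bool and c :: "int \<times> int" and k :: int and u :: complex
  assumes "is_fabric D" and "periodic D" and "order D > 4"
    and "H1 D = generated {f \<in> H1 D. glide_reflection f}"
    and "\<forall>\<sigma> \<rho>. \<exists>f \<in> H1 D. f ` strand_line \<sigma> = strand_line \<rho>"
    and "perfect a b D"
    and "u = Complex (1 / sqrt 2) (1 / sqrt 2) \<or> u = Complex (1 / sqrt 2) (- 1 / sqrt 2)"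
    and "k \<noteq> 0"
    and "is_sym D (glide_map (centre c) u (of_int k * sqrt 2)) False"
  shows "((even k \<and> \<not> redundant a b c) \<or> (odd k \<and> redundant a b c) \<longrightarrow>
            is_sym (pattern a b D) (glide_map (centre c) u (of_int k * sqrt 2)) False) \<and>
         ((even k \<and> redundant a b c) \<or> (odd k \<and> \<not> redundant a b c) \<longrightarrow>
            is_sym (pattern a b D) (glide_map (centre c) u (of_int k * sqrt 2)) True)"
proof -
  let ?E = "even (fst c + snd c + k)"
  have S: "is_sym (pattern a b D) (glide_map (centre c) u (of_int k * sqrt 2)) (a = (?E = b))"
    using assms(7)
  proof
    assume u: "u = Complex (1 / sqrt 2) (1 / sqrt 2)"
    show ?thesis unfolding u
      by (rule main[where h="\<lambda>(x,y). (fst c - snd c + y + k, snd c - fst c + x + k)", OF assms(9)[unfolded u] s1]) (auto simp: g1)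
  next
    assume u: "u = Complex (1 / sqrt 2) (- 1 / sqrt 2)"
    show ?thesis unfolding u
      by (rule main[where h="\<lambda>(x,y). (fst c + snd c - y + k, fst c + snd c - x - k)", OF assms(9)[unfolded u] s2]) (auto simp: g2[simplified])
  qed
  have R: "redundant a b c = (a = (even (fst c + snd c) = b))"
    unfolding redundant_def by auto
  show ?thesis using S R by auto
qed

end
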